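(* Let $m,n$ be positive integers, let $\bm{D}_0\in\mathbb{R}^{m\times m}$ be invertible, let $\bm{X}_0\in\mathbb{R}^{m\times n}$, and let $\bm{Y}=\bm{D}_0\bm{X}_0$. Let $\Omega\subseteq[m]\times[n]$ be the support of $\bm{X}_0$ (the set of index pairs of its nonzero entries) and $\Omega^c$ its complement. Consider the linear system in the unknowns $\bm{H}\in\mathbb{R}^{m\times m}$ and $\bm{X}\in\mathbb{R}^{m\times n}$: $$\left[\bm{Y}^{T},-\bm{I}_{n\times n}\right]\left[\begin{array}{c}\bm{H}^{T}\\ \bm{X}^{T}\end{array}\right]=\bm{0}_{n\times m}\quad\text{and}\quad \mathcal{P}_{\Omega^{c}}(\bm{X})=\bm{0},$$ i.e. $\bm{H}\bm{Y}=\bm{X}$ and $\bm{X}_{i,j}=0$ for all $(i,j)\in\Omega^c$. Then this system has at least $m$ linearly independent solutions, where a solution is identified with the matrix $\left[\bm{H},\bm{X}\right]^{T}\in\mathbb{R}^{(m+n)\times m}$.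
   Context: $[n]=\{1,\dots,n\}$. For a matrix $\bm{X}$ and an index set $\Omega^c$, $\mathcal{P}_{\Omega^c}(\bm{X})$ denotes the vector of entries of $\bm{X}$ indexed by $\Omega^c$. *)

theory Defs
  imports "HOL-Analysis.Analysis"
begin

definition matrix_support :: "real^'n^'m \<Rightarrow> ('m \<times> 'n) set" where
  "matrix_support A = {(i, j). A $ i $ j \<noteq> 0}"

text \<open>A solution is the pair (H, X),
  i.e. the block matrix [H, X]^T, viewed as an element of the product vector space.\<close>
definition solution_set :: "real^'m^'m \<Rightarrow> real^'n^'m \<Rightarrow> ((real^'m^'m) \<times> (real^'n^'m)) set" where
  "solution_set D0 X0 =
     {p. fst p ** (D0 ** X0) = snd p \<and>
          (\<forall>i j. (i, j) \<notin> matrix_support X0 \<longrightarrow> snd p $ i $ j = 0)}"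

end

theory Submission
  imports Defs
begin

lemma my_rdistrib: "((A::real^'m^'n) + B) ** C = A ** C + B ** C"
  by (vector matrix_matrix_mult_def sum.distrib[symmetric] field_simps)

theorem proposition1:
  fixes D0 :: "real^'m^'m" and X0 :: "real^'n^'m"
  assumes "invertible D0"
  shows "\<exists>S. S \<subseteq> solution_set D0 X0 \<and> independent S \<and> card S = CARD('m)"
proof -
  obtain Di where Di: "Di ** D0 = mat 1" using assms unfolding invertible_def by blast
  define P :: "'m \<Rightarrow> real^'m^'m" where "P k = (\<chi> i j. if i = k \<and> j = k then 1 else 0)" for k
  define v where "v k = (P k ** Di, P k ** X0)" for k
  have HD: "P k ** Di ** D0 = P k" for k
    by (metis Di matrix_mul_assoc matrix_mul_rid)
  have PX: "(P k ** X0) $ i $ j = (if i = k then X0 $ k $ j else 0)" for k i j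
  proof -
    have "(P k ** X0) $ i $ j = (\<Sum>l\<in>UNIV. (if i = k \<and> l = k then 1 else 0) * X0 $ l $ j)"
      by (simp add: matrix_matrix_mult_def P_def)
    also have "\<dots> = (if i = k then X0 $ k $ j else 0)"
      by (cases "i = k") (simp_all add: if_distrib[where f="\<lambda>x. x * _"] cong: if_cong)
    finally show ?thesis .
  qed
  have Pkk: "P k $ i $ j = (if i = k \<and> j = k then 1 else 0)" for k i j
    by (simp add: P_def)
  have inj: "inj v"
  proof
    fix k l assume "v k = v l"
    then have "P k ** Di ** D0 = P l ** Di ** D0" by (simp add: v_def)
    then have "P k = P l" by (simp add: HD)
    then have "P k $ k $ k = P l $ k $ k" by simp
    then show "k = l" by (simp add: Pkk split: if_splits)
  qed
  let ?S = "range v"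
  have sub: "?S \<subseteq> solution_set D0 X0"
  proof
    fix p assume "p \<in> ?S"
    then obtain k where p: "p = v k" by blast
    have "fst p ** (D0 ** X0) = snd p"
      by (simp add: p v_def matrix_mul_assoc HD)
    moreover have "\<forall>i j. (i, j) \<notin> matrix_support X0 \<longrightarrow> snd p $ i $ j = 0"
      by (simp add: p v_def PX matrix_support_def)
    ultimately show "p \<in> solution_set D0 X0" by (simp add: solution_set_def)
  qed
  have ind: "independent ?S"
    unfolding independent_explicit
  proof (intro conjI allI impI ballI)
    show "finite ?S" by simp
    fix c assume c: "(\<Sum>w\<in>?S. c w *\<^sub>R w) = 0"
    fix w assume "w \<in> ?S"
    then obtain k where w: "w = v k" by blast
    have "(\<Sum>k\<in>UNIV. c (v k) *\<^sub>R v k) = 0"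
      using c by (simp add: sum.reindex[OF inj])
    then have "fst (\<Sum>k\<in>UNIV. c (v k) *\<^sub>R v k) = 0" by simp
    then have "(\<Sum>k\<in>UNIV. c (v k) *\<^sub>R (P k ** Di)) = 0"
      by (simp add: fst_sum v_def)
    then have "(\<Sum>k\<in>UNIV. c (v k) *\<^sub>R (P k ** Di)) ** D0 = 0" by simp
    moreover have "(\<Sum>k\<in>UNIV. c (v k) *\<^sub>R (P k ** Di)) ** D0 = (\<Sum>k\<in>UNIV. c (v k) *\<^sub>R P k)"
    proof -
      have "\<And>A::real^'m^'m. A ** D0 = (\<chi> i j. \<Sum>l\<in>UNIV. A $ i $ l * D0 $ l $ j)"
        by (simp add: matrix_matrix_mult_def)
      have lin: "(\<Sum>k\<in>F. c (v k) *\<^sub>R (P k ** Di)) ** D0 = (\<Sum>k\<in>F. c (v k) *\<^sub>R (P k ** Di ** D0))"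
        if "finite F" for F
        using that
      proof (induction F rule: finite_induct)
        case empty then show ?case by (simp add: matrix_matrix_mult_def vec_eq_iff)
      next
        case (insert x F)
        then show ?case
          by (simp add: my_rdistrib scalar_matrix_assoc[symmetric])
      qed
      show ?thesis using lin[of UNIV] by (simp add: HD)
    qed
    ultimately have "(\<Sum>k\<in>UNIV. c (v k) *\<^sub>R P k) = 0" by simp
    then have "(\<Sum>l\<in>UNIV. c (v l) *\<^sub>R P l) $ k $ k = 0" by simp
    moreover have "(\<Sum>l\<in>UNIV. c (v l) *\<^sub>R P l) $ k $ k = c (v k)"
      by (simp add: sum_component Pkk if_distrib cong: if_cong)
    ultimately show "c w = 0" by (simp add: w)
  qed
  have "card ?S = CARD('m)" by (simp add: card_image[OF inj])
  with sub ind show ?thesis by blast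
qed

end
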